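(* Let $P_n$ be the path on $n\ge 3$ vertices $1,\dots,n$ with edges $e_i=\{i,i+1\}$ ($1\le i\le n-1$), let $f_j=\{j,j+2\}$ ($1\le j\le n-2$), let $B=\{e_1,f_1,e_2,f_2,\dots,e_{n-2},f_{n-2},e_{n-1}\}$ (a basis of the row space of $\mathfrak{D}_2(P_n)$), and let $\mathfrak{D}_{P_n}=\mathfrak{D}_2(P_n)[B,B]$. For $\alpha\in B$, let $\mathfrak{D}_{P_n}(\alpha|\alpha)$ be the matrix obtained from $\mathfrak{D}_{P_n}$ by deleting the row and column indexed by $\alpha$. Then $\det\mathfrak{D}_{P_n}(\alpha|\alpha)=-(n-1)$ if $\alpha$ is a pendant edge of $P_n$ (i.e. $\alpha\in\{e_1,e_{n-1}\}$), and $\det\mathfrak{D}_{P_n}(\alpha|\alpha)=-(2n-3)$ otherwise.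
   Context: For a tree $T$, let $\mathcal{V}_2$ be the set of 2-element vertex subsets (edges regarded as elements of $\mathcal{V}_2$). The 2-Steiner distance matrix $\mathfrak{D}_2(T)$ is indexed by $\mathcal{V}_2$, with entry in row $\{i,j\}$, column $\{k,l\}$ equal to the minimum number of edges of a connected subtree of $T$ whose vertex set contains $i,j,k,l$. $M[B,B]$ denotes the principal submatrix with rows and columns indexed by $B$. *)

theory Defs
  imports "Jordan_Normal_Form.Determinant"
begin

definition path_adj :: "nat \<Rightarrow> nat \<Rightarrow> nat \<Rightarrow> bool" where
  "path_adj n i j \<longleftrightarrow> i \<in> {1..n} \<and> j \<in> {1..n} \<and> (j = i + 1 \<or> i = j + 1)"

text \<open>S is the vertex set of a connected subtree of P_n (induced subgraph connected).
  Such a subtree has card S - 1 edges.\<close>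
definition path_connected_set :: "nat \<Rightarrow> nat set \<Rightarrow> bool" where
  "path_connected_set n S \<longleftrightarrow> S \<noteq> {} \<and> S \<subseteq> {1..n} \<and>
     (\<forall>x\<in>S. \<forall>y\<in>S. (x, y) \<in> {(a, b). a \<in> S \<and> b \<in> S \<and> path_adj n a b}\<^sup>*)"

definition path_steiner :: "nat \<Rightarrow> nat set \<Rightarrow> nat" where
  "path_steiner n X = (LEAST k. \<exists>S. path_connected_set n S \<and> X \<subseteq> S \<and> card S = k + 1)"

text \<open>The ordered basis B = (e_1, f_1, e_2, f_2, ..., f_{n-2}, e_{n-1}), 0-indexed:
  index 2i is e_{i+1} = {i+1,i+2}, index 2i+1 is f_{i+1} = {i+1,i+3}.\<close>
definition basis_elem :: "nat \<Rightarrow> nat set" where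
  "basis_elem t = (if even t then {t div 2 + 1, t div 2 + 2} else {t div 2 + 1, t div 2 + 3})"

definition D_Pn :: "nat \<Rightarrow> int mat" where
  "D_Pn n = mat (2 * n - 3) (2 * n - 3)
     (\<lambda>(a, b). int (path_steiner n (basis_elem a \<union> basis_elem b)))"

end

theory Submission
  imports Defs
begin


abbreviation "prel n S \<equiv> {(a, b). a \<in> S \<and> b \<in> S \<and> path_adj n a b}"

lemma between:
  assumes "(x,y) \<in> (prel n S)\<^sup>*" and "x \<in> S"
  shows "{min x y..max x y} \<subseteq> S"
  using assms(1)
proof (induction rule: rtrancl_induct)
  case base
  then show ?case using assms(2) by auto
next
  case (step y z)
  then have "z \<in> S" "z = y + 1 \<or> y = z + 1" by (auto simp: path_adj_def)
  show ?case
  proof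
    fix w assume "w \<in> {min x z..max x z}"
    then have "w \<in> {min x y..max x y} \<or> w = z" using \<open>z = y + 1 \<or> y = z + 1\<close> by auto
    then show "w \<in> S" using step.IH \<open>z \<in> S\<close> by blast
  qed
qed

lemma interval_conn_aux:
  assumes "1 \<le> lo" "hi \<le> n" "lo \<le> x"
  shows "x + k \<le> hi \<Longrightarrow> (x, x+k) \<in> (prel n {lo..hi})\<^sup>* \<and> (x+k, x) \<in> (prel n {lo..hi})\<^sup>*"
proof (induction k)
  case 0
  then show ?case by auto
next
  case (Suc k)
  then have IH: "(x, x+k) \<in> (prel n {lo..hi})\<^sup>*" "(x+k, x) \<in> (prel n {lo..hi})\<^sup>*" by auto
  have e1: "(x+k, x + Suc k) \<in> prel n {lo..hi}" and e2: "(x + Suc k, x+k) \<in> prel n {lo..hi}"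
    using Suc.prems assms by (auto simp: path_adj_def)
  show ?case using IH e1 e2
    by (meson converse_rtrancl_into_rtrancl rtrancl.rtrancl_into_rtrancl)
qed

lemma interval_conn:
  assumes "1 \<le> lo" "lo \<le> hi" "hi \<le> n"
  shows "path_connected_set n {lo..hi}"
  unfolding path_connected_set_def
proof (intro conjI ballI)
  show "{lo..hi} \<noteq> {}" using assms by auto
  show "{lo..hi} \<subseteq> {1..n}" using assms by auto
  fix x y assume x: "x \<in> {lo..hi}" and y: "y \<in> {lo..hi}"
  show "(x, y) \<in> (prel n {lo..hi})\<^sup>*"
  proof (cases "x \<le> y")
    case True
    then obtain k where "y = x + k" using le_Suc_ex by blast
    then show ?thesis using interval_conn_aux[of lo hi n x k] assms x y by auto
  next
    case False
    then obtain k where "x = y + k" using le_Suc_ex[of y x] by auto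
    then show ?thesis using interval_conn_aux[of lo hi n y k] assms x y by auto
  qed
qed

lemma steiner:
  assumes "lo \<in> X" "hi \<in> X" "X \<subseteq> {lo..hi}" "1 \<le> lo" "hi \<le> n"
  shows "path_steiner n X = hi - lo"
  unfolding path_steiner_def
proof (rule Least_equality)
  have lh: "lo \<le> hi" using assms by auto
  show "\<exists>S. path_connected_set n S \<and> X \<subseteq> S \<and> card S = hi - lo + 1"
    by (rule exI[of _ "{lo..hi}"]) (use interval_conn[OF assms(4) lh assms(5)] assms lh in auto)
next
  fix k assume "\<exists>S. path_connected_set n S \<and> X \<subseteq> S \<and> card S = k + 1"
  then obtain S where S: "path_connected_set n S" "X \<subseteq> S" "card S = k + 1" by blast
  have "lo \<in> S" "hi \<in> S" using S assms by auto
  then have "(lo, hi) \<in> (prel n S)\<^sup>*" using S(1) unfolding path_connected_set_def by blast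
  moreover have "lo \<le> hi" using assms by auto
  ultimately have "{lo..hi} \<subseteq> S" using between[of lo hi S n] \<open>lo \<in> S\<close> by (simp add: min_def max_def)
  moreover have "finite S" using S unfolding path_connected_set_def using finite_subset by blast
  ultimately have "card {lo..hi} \<le> card S" by (rule card_mono[rotated])
  then show "hi - lo \<le> k" using S by auto
qed



definition Ldiff :: "nat \<Rightarrow> 'a::comm_ring_1 mat" where
  "Ldiff N = mat N N (\<lambda>(i,j). (if i = j then 1 else 0) - (if i = Suc j then 1 else 0))"

lemma Ldiff_carrier[simp]: "Ldiff N \<in> carrier_mat N N" by (simp add: Ldiff_def)

lemma det_Ldiff: "det (Ldiff N :: 'a::comm_ring_1 mat) = 1"
proof -
  have "det (Ldiff N :: 'a mat) = prod_list (diag_mat (Ldiff N :: 'a mat))"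
    by (rule det_lower_triangular[of N]) (auto simp: Ldiff_def)
  also have "\<dots> = 1" unfolding prod_list_diag_prod by (simp add: Ldiff_def)
  finally show ?thesis .
qed

lemma sum_shift_pick:
  fixes g :: "nat \<Rightarrow> 'a::comm_ring_1"
  assumes "i < N"
  shows "(\<Sum>k\<in>{0..<N}. (if i = Suc k then 1 else 0) * g k) = (if 0 < i then g (i - 1) else 0)"
proof -
  have "(\<Sum>k\<in>{0..<N}. (if i = Suc k then 1 else 0) * g k) = (\<Sum>k\<in>{0..<N}. if k = i - 1 \<and> 0 < i then g k else 0)"
    by (rule sum.cong) auto
  also have "\<dots> = (if 0 < i then g (i - 1) else 0)"
    using assms by (cases "0 < i") (auto simp: sum.delta')
  finally show ?thesis .
qed

lemma sum_pick:
  fixes g :: "nat \<Rightarrow> 'a::comm_ring_1"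
  assumes "i < N"
  shows "(\<Sum>k\<in>{0..<N}. (if i = k then 1 else 0) * g k) = g i"
    "(\<Sum>k\<in>{0..<N}. g k * (if i = k then 1 else 0)) = g i"
proof -
  have "(\<Sum>k\<in>{0..<N}. (if i = k then 1 else 0) * g k) = (\<Sum>k\<in>{0..<N}. if i = k then g k else 0)"
    by (rule sum.cong) auto
  then show "(\<Sum>k\<in>{0..<N}. (if i = k then 1 else 0) * g k) = g i" using assms by (simp add: sum.delta)
  have "(\<Sum>k\<in>{0..<N}. g k * (if i = k then 1 else 0)) = (\<Sum>k\<in>{0..<N}. if i = k then g k else 0)"
    by (rule sum.cong) auto
  then show "(\<Sum>k\<in>{0..<N}. g k * (if i = k then 1 else 0)) = g i" using assms by (simp add: sum.delta)
qed

lemma sum_shift_pick2: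
  fixes g :: "nat \<Rightarrow> 'a::comm_ring_1"
  assumes "i < N"
  shows "(\<Sum>k\<in>{0..<N}. g k * (if i = Suc k then 1 else 0)) = (if 0 < i then g (i - 1) else 0)"
  using sum_shift_pick[OF assms, of g] by (simp add: mult.commute)

lemma Ldiff_mult:
  assumes "B \<in> carrier_mat N N" "i < N" "j < N"
  shows "(Ldiff N * B) $$ (i,j) = B $$ (i,j) - (if 0 < i then B $$ (i - 1, j) else 0)"
proof -
  have "(Ldiff N * B) $$ (i,j) = (\<Sum>k\<in>{0..<N}. ((if i = k then 1 else 0) - (if i = Suc k then 1 else 0)) * B $$ (k,j))"
    using assms by (simp add: Ldiff_def scalar_prod_def)
  also have "\<dots> = (\<Sum>k\<in>{0..<N}. (if i = k then 1 else 0) * B $$ (k,j)) - (\<Sum>k\<in>{0..<N}. (if i = Suc k then 1 else 0) * B $$ (k,j))"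
    by (simp add: left_diff_distrib sum_subtractf)
  also have "\<dots> = B $$ (i,j) - (if 0 < i then B $$ (i - 1, j) else 0)"
    using assms sum_shift_pick[OF assms(2), of "\<lambda>k. B $$ (k,j)"] sum_pick[OF assms(2), of "\<lambda>k. B $$ (k,j)"] by simp
  finally show ?thesis .
qed

lemma mult_LdiffT:
  assumes "B \<in> carrier_mat N N" "i < N" "j < N"
  shows "(B * transpose_mat (Ldiff N)) $$ (i,j) = B $$ (i,j) - (if 0 < j then B $$ (i, j - 1) else 0)"
proof -
  have "(B * transpose_mat (Ldiff N)) $$ (i,j) = (\<Sum>k\<in>{0..<N}. B $$ (i,k) * ((if j = k then 1 else 0) - (if j = Suc k then 1 else 0)))"
    using assms by (simp add: Ldiff_def scalar_prod_def)
  also have "\<dots> = (\<Sum>k\<in>{0..<N}. B $$ (i,k) * (if j = k then 1 else 0)) - (\<Sum>k\<in>{0..<N}. B $$ (i,k) * (if j = Suc k then 1 else 0))"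
    by (simp add: right_diff_distrib sum_subtractf)
  also have "\<dots> = B $$ (i,j) - (if 0 < j then B $$ (i, j - 1) else 0)"
    using assms sum_shift_pick2[OF assms(3), of "\<lambda>k. B $$ (i,k)"] sum_pick[OF assms(3), of "\<lambda>k. B $$ (i,k)"] by simp
  finally show ?thesis .
qed



lemma E_entries:
  fixes N :: nat and p q :: "nat \<Rightarrow> 'a::comm_ring_1"
  defines "M \<equiv> mat N N (\<lambda>(i,j). p (max i j) + q (min i j))"
  assumes "i < N" "j < N"
  shows "(Ldiff N * M * transpose_mat (Ldiff N)) $$ (i,j) =
    (if i = 0 \<and> j = 0 then p 0 + q 0 else if i = 0 then p j - p (j - 1)
     else if j = 0 then p i - p (i - 1) else if i = j then q i - q (i - 1) - (p i - p (i - 1)) else 0)"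
proof -
  have Mc: "M \<in> carrier_mat N N" by (simp add: M_def)
  have Xc: "Ldiff N * M \<in> carrier_mat N N" using Mc by (metis Ldiff_carrier mult_carrier_mat)
  have X: "\<And>i j. i < N \<Longrightarrow> j < N \<Longrightarrow> (Ldiff N * M) $$ (i,j) = M $$ (i,j) - (if 0 < i then M $$ (i - 1, j) else 0)"
    using Ldiff_mult[OF Mc] by blast
  have "(Ldiff N * M * transpose_mat (Ldiff N)) $$ (i,j) =
     (Ldiff N * M) $$ (i,j) - (if 0 < j then (Ldiff N * M) $$ (i, j - 1) else 0)"
    using mult_LdiffT[OF Xc assms(2,3)] .
  also have "\<dots> = M $$ (i,j) - (if 0 < i then M $$ (i - 1, j) else 0)
      - (if 0 < j then M $$ (i, j - 1) - (if 0 < i then M $$ (i - 1, j - 1) else 0) else 0)"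
    using assms X by auto
  also have "\<dots> = (if i = 0 \<and> j = 0 then p 0 + q 0 else if i = 0 then p j - p (j - 1)
     else if j = 0 then p i - p (i - 1) else if i = j then q i - q (i - 1) - (p i - p (i - 1)) else 0)"
  proof -
    consider "i = 0" "j = 0" | "i = 0" "j > 0" | "i > 0" "j = 0" | "i > 0" "i < j" | "i > 0" "i = j" | "j > 0" "j < i"
      by linarith
    then show ?thesis
    proof cases
      case 1 then show ?thesis using assms by (simp add: M_def)
    next
      case 2 then show ?thesis using assms by (simp add: M_def)
    next
      case 3 then show ?thesis using assms by (simp add: M_def)
    next
      case 4
      then have "max i j = j" "min i j = i" "max (i-1) j = j" "min (i-1) j = i - 1"
        "max i (j-1) = j - 1" "min i (j-1) = i" "max (i-1) (j-1) = j - 1" "min (i-1) (j-1) = i - 1" by auto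
      moreover have "i - 1 < N" "j - 1 < N" using assms by auto
      ultimately show ?thesis using assms 4 by (simp add: M_def algebra_simps)
    next
      case 5
      then have "max i j = i" "min i j = i" "max (i-1) j = i" "min (i-1) j = i - 1"
        "max i (j-1) = i" "min i (j-1) = i - 1" "max (i-1) (j-1) = i - 1" "min (i-1) (j-1) = i - 1" by auto
      moreover have "i - 1 < N" "j - 1 < N" using assms by auto
      ultimately show ?thesis using assms 5 by (simp add: M_def algebra_simps)
    next
      case 6
      then have "max i j = i" "min i j = j" "max (i-1) j = i - 1" "min (i-1) j = j"
        "max i (j-1) = i" "min i (j-1) = j - 1" "max (i-1) (j-1) = i - 1" "min (i-1) (j-1) = j - 1" by auto
      moreover have "i - 1 < N" "j - 1 < N" using assms by auto
      ultimately show ?thesis using assms 6 by (simp add: M_def algebra_simps)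
    qed
  qed
  finally show ?thesis .
qed



lemma det_arrow:
  fixes E :: "'a::field mat" and N :: nat
  assumes Ec: "E \<in> carrier_mat N N" and N: "0 < N"
    and off: "\<And>i j. i < N \<Longrightarrow> j < N \<Longrightarrow> 0 < i \<Longrightarrow> 0 < j \<Longrightarrow> i \<noteq> j \<Longrightarrow> E $$ (i,j) = 0"
    and dg: "\<And>i. 0 < i \<Longrightarrow> i < N \<Longrightarrow> E $$ (i,i) \<noteq> 0"
  shows "det E = (E $$ (0,0) - (\<Sum>k\<in>{1..<N}. E $$ (0,k) * E $$ (k,0) / E $$ (k,k))) * (\<Prod>k\<in>{1..<N}. E $$ (k,k))"
proof -
  define K where "K = mat N N (\<lambda>(i,j). if i = j then 1 else if j = 0 then - (E $$ (i,0) / E $$ (i,i)) else 0)"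
  have Kc: "K \<in> carrier_mat N N" by (simp add: K_def)
  have detK: "det K = 1"
  proof -
    have "det K = prod_list (diag_mat K)"
      by (rule det_lower_triangular[OF _ Kc]) (auto simp: K_def)
    also have "\<dots> = 1" unfolding prod_list_diag_prod by (simp add: K_def)
    finally show ?thesis .
  qed
  have split0: "\<And>f :: nat \<Rightarrow> 'a. (\<Sum>k\<in>{0..<N}. f k) = f 0 + (\<Sum>k\<in>{1..<N}. f k)"
    using N by (metis One_nat_def sum.atLeast_Suc_lessThan)
  have F: "\<And>i j. i < N \<Longrightarrow> j < N \<Longrightarrow> (E * K) $$ (i,j) = (\<Sum>k\<in>{0..<N}. E $$ (i,k) * K $$ (k,j))"
    using Ec Kc by (simp add: scalar_prod_def)
  have Fj: "(E * K) $$ (i,j) = E $$ (i,j)" if "i < N" "j < N" "0 < j" for i j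
  proof -
    have "(E * K) $$ (i,j) = (\<Sum>k\<in>{0..<N}. E $$ (i,k) * (if j = k then 1 else 0))"
      using F[OF that(1,2)] that by (auto simp: K_def intro!: sum.cong)
    also have "\<dots> = E $$ (i,j)" using sum_pick(2)[OF that(2)] .
    finally show ?thesis .
  qed
  have Fi0: "(E * K) $$ (i,0) = 0" if "i < N" "0 < i" for i
  proof -
    have "(E * K) $$ (i,0) = E $$ (i,0) + (\<Sum>k\<in>{1..<N}. E $$ (i,k) * (- (E $$ (k,0) / E $$ (k,k))))"
      using F[OF that(1) N] split0 by (simp add: K_def)
    also have "(\<Sum>k\<in>{1..<N}. E $$ (i,k) * (- (E $$ (k,0) / E $$ (k,k)))) =
       (\<Sum>k\<in>{1..<N}. if k = i then - E $$ (i,0) else 0)"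
    proof (rule sum.cong[OF refl])
      fix k assume k: "k \<in> {1..<N}"
      show "E $$ (i,k) * (- (E $$ (k,0) / E $$ (k,k))) = (if k = i then - E $$ (i,0) else 0)"
      proof (cases "k = i")
        case True then show ?thesis using dg[of i] that by simp
      next
        case False then have "E $$ (i,k) = 0" using off[of i k] k that by simp
        then show ?thesis using False by simp
      qed
    qed
    also have "\<dots> = - E $$ (i,0)" using that by (simp add: sum.delta')
    finally show ?thesis by simp
  qed
  have F00: "(E * K) $$ (0,0) = E $$ (0,0) - (\<Sum>k\<in>{1..<N}. E $$ (0,k) * E $$ (k,0) / E $$ (k,k))"
  proof -
    have "(E * K) $$ (0,0) = E $$ (0,0) + (\<Sum>k\<in>{1..<N}. E $$ (0,k) * (- (E $$ (k,0) / E $$ (k,k))))"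
      using F[OF N N] split0 by (simp add: K_def)
    then show ?thesis by (simp add: sum_negf)
  qed
  have EKc: "E * K \<in> carrier_mat N N" using Ec Kc by (metis mult_carrier_mat)
  have ut: "upper_triangular (E * K)"
  proof
    fix i j assume "j < i" "i < dim_row (E * K)"
    then have "i < N" using EKc by auto
    show "(E * K) $$ (i,j) = 0"
    proof (cases "j = 0")
      case True then show ?thesis using Fi0 \<open>i < N\<close> \<open>j < i\<close> by auto
    next
      case False then show ?thesis using Fj off \<open>i < N\<close> \<open>j < i\<close> by auto
    qed
  qed
  have "det (E * K) = prod_list (diag_mat (E * K))" by (rule det_upper_triangular[OF ut EKc])
  also have "\<dots> = (\<Prod>i = 0..<N. (E * K) $$ (i,i))" unfolding prod_list_diag_prod using Ec by simp
  also have "\<dots> = (E * K) $$ (0,0) * (\<Prod>i = 1..<N. (E * K) $$ (i,i))"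
    using prod.atLeast_Suc_lessThan[OF N, of "\<lambda>i. (E * K) $$ (i,i)"] by simp
  also have "(\<Prod>i = 1..<N. (E * K) $$ (i,i)) = (\<Prod>i = 1..<N. E $$ (i,i))"
    using Fj by (intro prod.cong) auto
  finally have "det (E * K) = (E * K) $$ (0,0) * (\<Prod>i = 1..<N. E $$ (i,i))" .
  moreover have "det (E * K) = det E" using det_mult[OF Ec Kc] detK by simp
  ultimately show ?thesis using F00 by simp
qed



lemma det_maxmin:
  fixes p q :: "nat \<Rightarrow> 'a::field" and N :: nat
  assumes N: "0 < N" and nz: "\<And>k. 0 < k \<Longrightarrow> k < N \<Longrightarrow> q k - q (k - 1) - (p k - p (k - 1)) \<noteq> 0"
  shows "det (mat N N (\<lambda>(i,j). p (max i j) + q (min i j))) =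
    (p 0 + q 0 - (\<Sum>k\<in>{1..<N}. (p k - p (k - 1)) * (p k - p (k - 1)) / (q k - q (k - 1) - (p k - p (k - 1)))))
    * (\<Prod>k\<in>{1..<N}. q k - q (k - 1) - (p k - p (k - 1)))"
proof -
  define M where "M = mat N N (\<lambda>(i,j). p (max i j) + q (min i j))"
  define E where "E = Ldiff N * M * transpose_mat (Ldiff N)"
  have Mc: "M \<in> carrier_mat N N" by (simp add: M_def)
  have Lc: "(Ldiff N :: 'a mat) \<in> carrier_mat N N" by simp
  have LTc: "transpose_mat (Ldiff N :: 'a mat) \<in> carrier_mat N N" by simp
  have LMc: "Ldiff N * M \<in> carrier_mat N N" using Mc Lc by (metis mult_carrier_mat)
  have Ec: "E \<in> carrier_mat N N" unfolding E_def using LMc LTc by (metis mult_carrier_mat)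
  have "det E = det (Ldiff N * M) * det (transpose_mat (Ldiff N))"
    unfolding E_def by (rule det_mult[OF LMc LTc])
  also have "\<dots> = det M"
  proof -
    have d1: "det (Ldiff N :: 'a mat) = 1" by (rule det_Ldiff)
    show ?thesis using det_mult[OF Lc Mc] d1 det_transpose[OF Lc] by simp
  qed
  finally have dE: "det E = det M" .
  have Ee: "\<And>i j. i < N \<Longrightarrow> j < N \<Longrightarrow> E $$ (i,j) =
    (if i = 0 \<and> j = 0 then p 0 + q 0 else if i = 0 then p j - p (j - 1)
     else if j = 0 then p i - p (i - 1) else if i = j then q i - q (i - 1) - (p i - p (i - 1)) else 0)"
    unfolding E_def M_def by (rule E_entries)
  have "det E = (E $$ (0,0) - (\<Sum>k\<in>{1..<N}. E $$ (0,k) * E $$ (k,0) / E $$ (k,k))) * (\<Prod>k\<in>{1..<N}. E $$ (k,k))"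
  proof (rule det_arrow[OF Ec N])
    fix i assume i: "0 < i" "i < N"
    show "E $$ (i,i) \<noteq> 0" using nz[OF i] Ee i by simp
  qed (auto simp: Ee)
  also have "\<dots> = (p 0 + q 0 - (\<Sum>k\<in>{1..<N}. (p k - p (k - 1)) * (p k - p (k - 1)) / (q k - q (k - 1) - (p k - p (k - 1)))))
    * (\<Prod>k\<in>{1..<N}. q k - q (k - 1) - (p k - p (k - 1)))"
    using N by (auto simp: Ee intro!: sum.cong prod.cong arg_cong2[where f = "(*)"] arg_cong2[where f = "(-)"])
  finally show ?thesis using dE M_def by simp
qed



lemma be_props:
  "a div 2 + 1 \<in> basis_elem a" "(a+1) div 2 + 2 \<in> basis_elem a"
  by (auto simp: basis_elem_def elim!: oddE evenE)

lemma be_range: "x \<in> basis_elem a \<Longrightarrow> a div 2 + 1 \<le> x \<and> x \<le> (a+1) div 2 + 2"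
  unfolding basis_elem_def by (cases "even a") (auto elim!: oddE evenE)

lemma D_entry:
  assumes "3 \<le> n" "a < 2 * n - 3" "b < 2 * n - 3"
  shows "D_Pn n $$ (a,b) = int ((max a b + 1) div 2 + 2) - int (min a b div 2 + 1)"
proof -
  define lo where "lo = min a b div 2 + 1"
  define hi where "hi = (max a b + 1) div 2 + 2"
  let ?X = "basis_elem a \<union> basis_elem b"
  have lo: "lo \<in> ?X" unfolding lo_def using be_props(1)[of a] be_props(1)[of b] by (auto simp: min_def)
  have hi: "hi \<in> ?X" unfolding hi_def using be_props(2)[of a] be_props(2)[of b] by (auto simp: max_def)
  have sub: "?X \<subseteq> {lo..hi}"
  proof
    fix x assume "x \<in> ?X"
    then have "(a div 2 + 1 \<le> x \<and> x \<le> (a+1) div 2 + 2) \<or> (b div 2 + 1 \<le> x \<and> x \<le> (b+1) div 2 + 2)"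
      using be_range by blast
    moreover have "min a b div 2 \<le> a div 2" "min a b div 2 \<le> b div 2"
      "(a+1) div 2 \<le> (max a b + 1) div 2" "(b+1) div 2 \<le> (max a b + 1) div 2"
      by (auto intro: div_le_mono)
    ultimately show "x \<in> {lo..hi}" unfolding lo_def hi_def by auto
  qed
  have "max a b + 1 \<le> 2 * (n - 2) + 1" using assms by auto
  then have "(max a b + 1) div 2 \<le> (2 * (n - 2) + 1) div 2" by (rule div_le_mono)
  then have "(max a b + 1) div 2 \<le> n - 2" by simp
  then have hin: "hi \<le> n" unfolding hi_def using assms by auto
  have st: "path_steiner n ?X = hi - lo" by (rule steiner[OF lo hi sub _ hin]) (simp add: lo_def)
  have "lo \<le> hi" using sub lo by auto
  then show ?thesis using assms st unfolding D_Pn_def lo_def hi_def by simp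
qed



lemma telescope:
  fixes f :: "nat \<Rightarrow> 'a::ab_group_add"
  shows "(\<Sum>k\<in>{1..<Suc M}. f k - f (k - 1)) = f M - f 0"
  by (induction M) (auto simp: sum.atLeastLessThan_Suc)

lemma final_calc:
  fixes P Q :: "nat \<Rightarrow> int" and N t :: nat
  assumes N: "0 < N"
    and a1: "\<And>k. 0 < k \<Longrightarrow> k \<noteq> t \<Longrightarrow> (P k - P (k - 1)) * (P k - P (k - 1)) = P k - P (k - 1)"
    and a2: "\<And>k. 0 < k \<Longrightarrow> k \<noteq> t \<Longrightarrow> Q k - Q (k - 1) - (P k - P (k - 1)) = -1"
    and a3: "0 < t \<Longrightarrow> P t - P (t - 1) = 1"
    and a4: "0 < t \<Longrightarrow> Q t - Q (t - 1) - (P t - P (t - 1)) = -2"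
  shows "det (mat N N (\<lambda>(i,j). rat_of_int (P (max i j)) + rat_of_int (Q (min i j)))) =
    (rat_of_int (P 0 + Q 0) + rat_of_int (P (N - 1) - P 0) - (if t \<in> {1..<N} then 1/2 else 0))
    * ((-1) ^ (N - 1) * (if t \<in> {1..<N} then 2 else 1))"
proof -
  define p where "p x = rat_of_int (P x)" for x
  define q where "q x = rat_of_int (Q x)" for x
  have dd: "q k - q (k - 1) - (p k - p (k - 1)) = - (if k = t then 2 else 1)" if "0 < k" for k
  proof -
    have e: "q k - q (k-1) - (p k - p (k-1)) = rat_of_int (Q k - Q (k-1) - (P k - P (k-1)))"
      unfolding p_def q_def by simp
    show ?thesis
    proof (cases "k = t")
      case True then show ?thesis using e a4 that by simp
    next
      case False then show ?thesis using e a2[OF that False] by simp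
    qed
  qed
  have "det (mat N N (\<lambda>(i,j). p (max i j) + q (min i j))) =
    (p 0 + q 0 - (\<Sum>k\<in>{1..<N}. (p k - p (k - 1)) * (p k - p (k - 1)) / (q k - q (k - 1) - (p k - p (k - 1)))))
    * (\<Prod>k\<in>{1..<N}. q k - q (k - 1) - (p k - p (k - 1)))"
  proof (rule det_maxmin[OF N])
    fix k :: nat assume "0 < k" "k < N"
    then show "q k - q (k - 1) - (p k - p (k - 1)) \<noteq> 0" using dd[of k] by simp
  qed
  also have "(\<Sum>k\<in>{1..<N}. (p k - p (k - 1)) * (p k - p (k - 1)) / (q k - q (k - 1) - (p k - p (k - 1))))
     = (\<Sum>k\<in>{1..<N}. - (p k - p (k - 1)) + (if k = t then 1/2 else 0))"
  proof (rule sum.cong[OF refl])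
    fix k assume k: "k \<in> {1..<N}"
    have pe: "p k - p (k - 1) = rat_of_int (P k - P (k - 1))" unfolding p_def by simp
    have k0: "0 < k" using k by auto
    show "(p k - p (k - 1)) * (p k - p (k - 1)) / (q k - q (k - 1) - (p k - p (k - 1))) = - (p k - p (k - 1)) + (if k = t then 1/2 else 0)"
    proof (cases "k = t")
      case True
      then have h: "p k - p (k - 1) = 1" using a3 k0 pe by simp
      have d: "q k - q (k - 1) - (p k - p (k - 1)) = -2" using dd[OF k0] True by simp
      show ?thesis unfolding d unfolding h using True by simp
    next
      case False
      then have sq: "(p k - p (k - 1)) * (p k - p (k - 1)) = p k - p (k - 1)" unfolding pe
        using a1[OF k0 False] by (metis of_int_mult)
      have d: "q k - q (k - 1) - (p k - p (k - 1)) = -1" using dd[OF k0] False by simp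
      have "(p k - p (k - 1)) * (p k - p (k - 1)) / (-1) = - ((p k - p (k - 1)) * (p k - p (k - 1)))" by simp
      also have "\<dots> = - (p k - p (k - 1))" using sq by (rule arg_cong)
      finally have calc: "(p k - p (k - 1)) * (p k - p (k - 1)) / (-1) = - (p k - p (k - 1))" .
      show ?thesis unfolding d calc using False by simp
    qed
  qed
  also have "\<dots> = - (\<Sum>k\<in>{1..<N}. p k - p (k - 1)) + (if t \<in> {1..<N} then 1/2 else 0)"
    by (simp add: sum.distrib sum_negf sum.delta' sum_subtractf)
  also have "(\<Sum>k\<in>{1..<N}. p k - p (k - 1)) = p (N - 1) - p 0"
    using telescope[of p "N - 1"] N by simp
  also have "(\<Prod>k\<in>{1..<N}. q k - q (k - 1) - (p k - p (k - 1))) = (\<Prod>k\<in>{1..<N}. (-1) * (if k = t then 2 else 1))"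
  proof (rule prod.cong[OF refl])
    fix k assume "k \<in> {1..<N}"
    then have "0 < k" by auto
    then show "q k - q (k - 1) - (p k - p (k - 1)) = (-1) * (if k = t then 2 else 1)" using dd[of k] by simp
  qed
  also have "\<dots> = (-1) ^ (N - 1) * (if t \<in> {1..<N} then 2 else 1)"
    by (subst prod.distrib) (simp add: prod.delta prod.delta')
  finally show ?thesis unfolding p_def q_def by simp
qed



lemma steps:
  fixes s :: nat
  defines "P' \<equiv> \<lambda>s. int ((s+1) div 2 + 2)" and "Q' \<equiv> \<lambda>s. - int (s div 2 + 1)"
  shows "(P' (Suc s) - P' s) * (P' (Suc s) - P' s) = P' (Suc s) - P' s"
    "Q' (Suc s) - Q' s - (P' (Suc s) - P' s) = -1"
    "P' (Suc (Suc s)) - P' s = 1"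
    "Q' (Suc (Suc s)) - Q' s - (P' (Suc (Suc s)) - P' s) = -2"
  unfolding P'_def Q'_def by (cases "even s"; auto elim!: evenE oddE)+

lemma basis_cond:
  assumes "3 \<le> n" "t < 2 * n - 3"
  shows "(basis_elem t = {1, 2} \<or> basis_elem t = {n - 1, n}) \<longleftrightarrow> (t = 0 \<or> t = 2 * n - 4)"
proof
  assume "basis_elem t = {1, 2} \<or> basis_elem t = {n - 1, n}"
  then have h: "(basis_elem t = {1, 2} \<or> basis_elem t = {n - 1, n})" .
  show "t = 0 \<or> t = 2 * n - 4"
  proof (cases "even t")
    case True
    then obtain a where a: "t = 2 * a" by (auto elim: evenE)
    then have be: "basis_elem t = {a + 1, a + 2}" by (simp add: basis_elem_def)
    then have "(a + 1 = 1 \<and> a + 2 = 2) \<or> (a + 1 = 2 \<and> a + 2 = 1) \<or> (a + 1 = n - 1 \<and> a + 2 = n) \<or> (a + 1 = n \<and> a + 2 = n - 1)"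
      using h by (simp only: be doubleton_eq_iff) blast
    then show ?thesis using a assms by linarith
  next
    case False
    then obtain a where a: "t = 2 * a + 1" by (auto elim: oddE)
    then have be: "basis_elem t = {a + 1, a + 3}" by (simp add: basis_elem_def)
    then have "(a + 1 = 1 \<and> a + 3 = 2) \<or> (a + 1 = 2 \<and> a + 3 = 1) \<or> (a + 1 = n - 1 \<and> a + 3 = n) \<or> (a + 1 = n \<and> a + 3 = n - 1)"
      using h by (simp only: be doubleton_eq_iff) blast
    then show ?thesis using a assms by linarith
  qed
next
  assume "t = 0 \<or> t = 2 * n - 4"
  then show "basis_elem t = {1, 2} \<or> basis_elem t = {n - 1, n}"
  proof
    assume "t = 0" then show ?thesis by (simp add: basis_elem_def numeral_eq_Suc)
  next
    assume t: "t = 2 * n - 4"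
    then have "even t" "t div 2 = n - 2" using assms by auto
    then have b: "basis_elem t = {n - 2 + 1, n - 2 + 2}" by (simp add: basis_elem_def)
    have "n - 2 + 1 = n - 1" "n - 2 + 2 = n" using assms by auto
    then show ?thesis by (simp only: b) simp
  qed
qed



theorem theorem5p13:
  fixes n t :: nat
  assumes "n \<ge> 3" and "t < 2 * n - 3"
  shows "det (mat_delete (D_Pn n) t t) =
           (if basis_elem t = {1, 2} \<or> basis_elem t = {n - 1, n}
            then - (int n - 1) else - (2 * int n - 3))"
proof -
  define N where "N = 2 * n - 4"
  define sg where "sg x = (if x < t then x else Suc x)" for x
  define P where "P x = int ((sg x + 1) div 2 + 2)" for x
  define Q where "Q x = - int (sg x div 2 + 1)" for x
  have N2: "2 \<le> N" "N = 2 * n - 3 - 1" using assms unfolding N_def by auto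
  have sgmm: "max (sg i) (sg j) = sg (max i j)" "min (sg i) (sg j) = sg (min i j)" for i j
    by (auto simp: sg_def max_def min_def)
  have A: "mat_delete (D_Pn n) t t = mat N N (\<lambda>(i,j). P (max i j) + Q (min i j))"
  proof (rule eq_matI)
    show "dim_row (mat_delete (D_Pn n) t t) = dim_row (mat N N (\<lambda>(i,j). P (max i j) + Q (min i j)))"
      using N2 by (simp add: D_Pn_def)
    show "dim_col (mat_delete (D_Pn n) t t) = dim_col (mat N N (\<lambda>(i,j). P (max i j) + Q (min i j)))"
      using N2 by (simp add: D_Pn_def)
    fix i j assume i: "i < dim_row (mat N N (\<lambda>(i,j). P (max i j) + Q (min i j)))"
      and j: "j < dim_col (mat N N (\<lambda>(i,j). P (max i j) + Q (min i j)))"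
    then have i': "i < N" and j': "j < N" by auto
    have si: "sg i < 2 * n - 3" "sg j < 2 * n - 3" using i' j' N2 by (auto simp: sg_def)
    have "mat_delete (D_Pn n) t t $$ (i,j) = D_Pn n $$ (sg i, sg j)"
      using i' j' N2 unfolding mat_delete_def sg_def by (simp add: D_Pn_def)
    also have "\<dots> = int ((max (sg i) (sg j) + 1) div 2 + 2) - int (min (sg i) (sg j) div 2 + 1)"
      by (rule D_entry[OF assms(1) si])
    also have "\<dots> = P (max i j) + Q (min i j)" unfolding sgmm P_def Q_def by simp
    finally show "mat_delete (D_Pn n) t t $$ (i,j) = mat N N (\<lambda>(i,j). P (max i j) + Q (min i j)) $$ (i,j)"
      using i' j' by simp
  qed
  have sg_step: "sg k = Suc (sg (k - 1))" if "0 < k" "k \<noteq> t" for k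
    using that by (auto simp: sg_def)
  have sg_t: "sg t = Suc (Suc (sg (t - 1)))" if "0 < t"
    using that by (auto simp: sg_def)
  note st = steps[of "sg (k - 1)" for k]
  have a1: "(P k - P (k - 1)) * (P k - P (k - 1)) = P k - P (k - 1)" if "0 < k" "k \<noteq> t" for k
    using steps(1)[of "sg (k - 1)"] unfolding P_def sg_step[OF that] by simp
  have a2: "Q k - Q (k - 1) - (P k - P (k - 1)) = -1" if "0 < k" "k \<noteq> t" for k
    using steps(2)[of "sg (k - 1)"] unfolding P_def Q_def sg_step[OF that] by simp
  have a3: "P t - P (t - 1) = 1" if "0 < t"
    using steps(3)[of "sg (t - 1)"] unfolding P_def sg_t[OF that] by simp
  have a4: "Q t - Q (t - 1) - (P t - P (t - 1)) = -2" if "0 < t"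
    using steps(4)[of "sg (t - 1)"] unfolding P_def Q_def sg_t[OF that] by simp
  have "rat_of_int (det (mat_delete (D_Pn n) t t)) = det (map_mat rat_of_int (mat N N (\<lambda>(i,j). P (max i j) + Q (min i j))))"
    unfolding A by simp
  also have "map_mat rat_of_int (mat N N (\<lambda>(i,j). P (max i j) + Q (min i j))) =
      mat N N (\<lambda>(i,j). rat_of_int (P (max i j)) + rat_of_int (Q (min i j)))"
    by (rule eq_matI) auto
  also have "det \<dots> = (rat_of_int (P 0 + Q 0) + rat_of_int (P (N - 1) - P 0) - (if t \<in> {1..<N} then 1/2 else 0))
    * ((-1) ^ (N - 1) * (if t \<in> {1..<N} then 2 else 1))"
    by (rule final_calc[OF _ a1 a2 a3 a4]) (use N2 in auto)
  finally have R: "rat_of_int (det (mat_delete (D_Pn n) t t)) =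
    (rat_of_int (P 0 + Q 0) + rat_of_int (P (N - 1) - P 0) - (if t \<in> {1..<N} then 1/2 else 0))
    * ((-1) ^ (N - 1) * (if t \<in> {1..<N} then 2 else 1))" .
  have m1: "(-1 :: rat) ^ (N - 1) = -1"
  proof -
    have "N - 1 = Suc (2 * (n - 3))" using assms unfolding N_def by auto
    then show ?thesis by (simp add: power_mult)
  qed
  have bc: "(basis_elem t = {1, 2} \<or> basis_elem t = {n - 1, n}) \<longleftrightarrow> (t = 0 \<or> t = N)"
    using basis_cond[OF assms] unfolding N_def .
  have Nn: "N = 2 * (n - 2)" using assms unfolding N_def by simp
  have PN: "P (N - 1) = int n"
  proof (cases "t = N")
    case True
    then have "N - 1 < t" using N2 by simp
    then have "sg (N - 1) + 1 = 2 * (n - 2)" using N2 Nn unfolding sg_def by simp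
    then have "(sg (N - 1) + 1) div 2 = n - 2" by simp
    then show ?thesis unfolding P_def using assms by simp
  next
    case False
    then have "\<not> N - 1 < t" using assms(2) N2 by simp
    then have "sg (N - 1) + 1 = 2 * (n - 2) + 1" using N2 Nn unfolding sg_def by simp
    then have "(sg (N - 1) + 1) div 2 = n - 2" by simp
    then show ?thesis unfolding P_def using assms by simp
  qed
  consider "t = 0" | "t = N" | "0 < t" "t < N" using assms N2 by linarith
  then show ?thesis
  proof cases
    case 1
    then have "P 0 = 3" "Q 0 = -1" unfolding P_def Q_def sg_def by auto
    then have "rat_of_int (det (mat_delete (D_Pn n) t t)) = rat_of_int (- (int n - 1))"
      using R m1 PN 1 by simp
    then show ?thesis using bc 1 by (simp only: of_int_eq_iff) simp
  next
    case 2
    then have "P 0 = 2" "Q 0 = -1" using N2 unfolding P_def Q_def sg_def by auto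
    then have "rat_of_int (det (mat_delete (D_Pn n) t t)) = rat_of_int (- (int n - 1))"
      using R m1 PN 2 by simp
    then show ?thesis using bc 2 by (simp only: of_int_eq_iff) simp
  next
    case 3
    then have "P 0 = 2" "Q 0 = -1" using N2 unfolding P_def Q_def sg_def by auto
    then have "rat_of_int (det (mat_delete (D_Pn n) t t)) = rat_of_int (- (2 * int n - 3))"
      using R m1 PN 3 by (simp add: algebra_simps)
    then show ?thesis using bc 3 by (simp only: of_int_eq_iff) simp
  qed
qed

end
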